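(* Let $B$ be a Borel ideal of $S=k[x_1,\dots,x_n]$ and let $m$ be a monomial with $\max(m)=p$. If $m\in\mathrm{Bgens}(B)$ and $\deg m\ge\deg m'$ for all $m'\in\mathrm{Bgens}(B)$, then $\frac{m}{x_p}$ is a $p$-socle for $B$.
   Context: For a monomial $m=x_{i_1}\cdots x_{i_d}$ with $i_1\le\dots\le i_d$, $\max(m)=i_d$. A Borel ideal is a monomial ideal closed under Borel moves $m\mapsto m\frac{x_{i_1}}{x_{j_1}}\cdots\frac{x_{i_s}}{x_{j_s}}$ ($i_t<j_t$, all $x_{j_t}\mid m$); $\mathrm{Bgens}(B)$ is the unique minimal set $T$ of monomials such that $B$ is the smallest Borel ideal containing $T$. A monomial $\nu$ is a $p$-socle for $B$ if $(B:\nu)=(x_1,\dots,x_p)$. *)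

theory Defs
  imports Main "HOL-Library.Multiset"
begin

text \<open>Monomials of S = k[x_1,...,x_n] are represented by multisets of variable
indices: the monomial x_{i_1}...x_{i_d} is the multiset {#i_1,...,i_d#}.
Multiplication is multiset sum, divisibility is sub-multiset, degree is size.\<close>

type_synonym monomial = "nat multiset"

definition monomials :: "nat \<Rightarrow> monomial set" where
  "monomials n = {m. set_mset m \<subseteq> {1..n}}"

definition mdeg :: "monomial \<Rightarrow> nat" where
  "mdeg m = size m"

definition mmax :: "monomial \<Rightarrow> nat" where
  "mmax m = Max (set_mset m)"

definition monomial_ideal :: "nat \<Rightarrow> monomial set \<Rightarrow> bool" where
  "monomial_ideal n B \<longleftrightarrow> B \<subseteq> monomials n \<and> (\<forall>u\<in>B. \<forall>v\<in>monomials n. u + v \<in> B)"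

text \<open>Borel move: m \<mapsto> m * x_{i_1}/x_{j_1} * ... * x_{i_s}/x_{j_s}, i_t < j_t,
with x_{j_1}...x_{j_s} dividing m.\<close>
definition borel_move :: "monomial \<Rightarrow> monomial \<Rightarrow> bool" where
  "borel_move m m' \<longleftrightarrow> (\<exists>ps :: (nat \<times> nat) list.
      (\<forall>(i, j)\<in>set ps. 1 \<le> i \<and> i < j) \<and>
      mset (map snd ps) \<subseteq># m \<and>
      m' = m - mset (map snd ps) + mset (map fst ps))"

definition borel_ideal :: "nat \<Rightarrow> monomial set \<Rightarrow> bool" where
  "borel_ideal n B \<longleftrightarrow> monomial_ideal n B \<and>
     (\<forall>m\<in>B. \<forall>m'. borel_move m m' \<longrightarrow> m' \<in> B)"

definition borel_gen :: "nat \<Rightarrow> monomial set \<Rightarrow> monomial set" where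
  "borel_gen n T = \<Inter> {B. borel_ideal n B \<and> T \<subseteq> B}"

text \<open>T is a minimal set of monomials whose Borel closure is B (this set is
unique and is Bgens(B)).\<close>
definition is_Bgens :: "nat \<Rightarrow> monomial set \<Rightarrow> monomial set \<Rightarrow> bool" where
  "is_Bgens n B T \<longleftrightarrow> T \<subseteq> monomials n \<and> borel_gen n T = B \<and>
     (\<forall>T'. T' \<subset> T \<longrightarrow> borel_gen n T' \<noteq> B)"

definition colon :: "nat \<Rightarrow> monomial set \<Rightarrow> monomial \<Rightarrow> monomial set" where
  "colon n B \<nu> = {u \<in> monomials n. u + \<nu> \<in> B}"

definition var_ideal :: "nat \<Rightarrow> nat \<Rightarrow> monomial set" where
  "var_ideal n p = {u \<in> monomials n. \<exists>i\<in>set_mset u. i \<le> p}"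

definition is_socle :: "nat \<Rightarrow> monomial set \<Rightarrow> monomial \<Rightarrow> nat \<Rightarrow> bool" where
  "is_socle n B \<nu> p \<longleftrightarrow> \<nu> \<in> monomials n \<and> colon n B \<nu> = var_ideal n p"

end

theory Submission
  imports Defs
begin

definition elem :: "monomial \<Rightarrow> monomial \<Rightarrow> bool" where
  "elem x y \<longleftrightarrow> (\<exists>i j. 1 \<le> i \<and> i < j \<and> j \<in># x \<and> y = x - {#j#} + {#i#})"

lemma bm_star_aux:
  "\<forall>(i,j)\<in>set ps. 1 \<le> i \<and> i < j \<Longrightarrow> mset (map snd ps) \<subseteq># x
   \<Longrightarrow> elem\<^sup>*\<^sup>* x (x - mset (map snd ps) + mset (map fst ps))"
proof (induction ps arbitrary: x)
  case Nil
  then show ?case by simp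
next
  case (Cons q ps)
  obtain i j where q: "q = (i,j)" by fastforce
  let ?S = "mset (map snd ps)" and ?F = "mset (map fst ps)"
  have ij: "1 \<le> i" "i < j" using Cons.prems(1) q by auto
  have sub: "add_mset j ?S \<subseteq># x" using Cons.prems(2) q by simp
  then have jx: "j \<in># x" by (meson mset_subset_eqD union_single_eq_member)
  define x1 where "x1 = x - {#j#} + {#i#}"
  have e: "elem x x1" unfolding elem_def x1_def using ij jx by blast
  have S1: "?S \<subseteq># x - {#j#}" using sub
    by (metis add_mset_add_single subset_mset.le_diff_conv2 union_commute jx
        mset_subset_eq_single subset_mset.add_diff_inverse)
  have S2: "?S \<subseteq># x1" unfolding x1_def using S1
    by (auto simp: subseteq_mset_def le_SucI)
  have IH: "elem\<^sup>*\<^sup>* x1 (x1 - ?S + ?F)"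
    using Cons.IH Cons.prems(1) S2 by auto
  have eq: "x1 - ?S + ?F = x - mset (map snd (q#ps)) + mset (map fst (q#ps))"
    unfolding x1_def q using S1 ij
    apply (simp add: multiset_eq_iff subseteq_mset_def)
    apply (erule_tac x=i in allE)
    by (auto simp: Suc_diff_le)
  show ?case using e IH eq by (metis converse_rtranclp_into_rtranclp)
qed

lemma bm_star: "borel_move x y \<Longrightarrow> elem\<^sup>*\<^sup>* x y"
  unfolding borel_move_def using bm_star_aux by blast

lemma elem_bm: "elem x y \<Longrightarrow> borel_move x y"
proof -
  assume "elem x y"
  then obtain i j where h: "1 \<le> i" "i < j" "j \<in># x" "y = x - {#j#} + {#i#}"
    unfolding elem_def by blast
  show ?thesis unfolding borel_move_def
    by (rule exI[of _ "[(i,j)]"]) (use h in auto)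
qed

lemma borel_star_closed:
  assumes "borel_ideal n B" "elem\<^sup>*\<^sup>* x y" "x \<in> B" shows "y \<in> B"
  using assms(2,3)
proof (induction rule: rtranclp_induct)
  case base then show ?case .
next
  case (step y z)
  then show ?case using assms(1) elem_bm unfolding borel_ideal_def by blast
qed

lemma elem_monomials: "elem x y \<Longrightarrow> x \<in> monomials n \<Longrightarrow> y \<in> monomials n"
  unfolding elem_def monomials_def
  by (fastforce dest!: in_diffD)

lemma elem_size: "elem x y \<Longrightarrow> size y = size x"
  unfolding elem_def by (auto simp: size_Diff_singleton)
    (metis Suc_pred not_gr0 size_eq_0_iff_empty empty_iff set_mset_empty)

lemma star_size: "elem\<^sup>*\<^sup>* x y \<Longrightarrow> size y = size x"
  by (induction rule: rtranclp_induct) (auto dest: elem_size)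

lemma star_le: "elem\<^sup>*\<^sup>* x y \<Longrightarrow> \<forall>k\<in>#x. k \<le> p \<Longrightarrow> \<forall>k\<in>#y. k \<le> p"
proof (induction rule: rtranclp_induct)
  case base then show ?case by simp
next
  case (step y z)
  from step.hyps(2) obtain i j where "i < j" "j \<in># y" "z = y - {#j#} + {#i#}"
    unfolding elem_def by blast
  then show ?case using step.IH step.prems by (fastforce dest!: in_diffD)
qed

definition Cl :: "nat \<Rightarrow> monomial set \<Rightarrow> monomial set" where
  "Cl n T = {v \<in> monomials n. \<exists>g\<in>T. \<exists>g'. elem\<^sup>*\<^sup>* g g' \<and> g' \<subseteq># v}"

lemma Cl_elem: "v \<in> Cl n T \<Longrightarrow> elem v w \<Longrightarrow> w \<in> Cl n T"
proof -
  assume v: "v \<in> Cl n T" and e: "elem v w"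
  then obtain g g' where g: "g \<in> T" "elem\<^sup>*\<^sup>* g g'" "g' \<subseteq># v" and vm: "v \<in> monomials n"
    unfolding Cl_def by blast
  obtain i j where h: "1 \<le> i" "i < j" "j \<in># v" "w = v - {#j#} + {#i#}"
    using e unfolding elem_def by blast
  have wm: "w \<in> monomials n" using elem_monomials[OF e vm] .
  show ?thesis
  proof (cases "count g' j < count v j")
    case True
    have "count g' a \<le> count w a" for a
    proof -
      have "count g' a \<le> count v a" using g(3) by (simp add: mset_subset_eq_count)
      then show ?thesis using True unfolding h(4) by (cases "a = j"; cases "a = i") auto
    qed
    then have "g' \<subseteq># w" by (simp add: subseteq_mset_def)
    then show ?thesis using g wm unfolding Cl_def by blast
  next
    case False
    then have jg: "j \<in># g'" using h(3) by (simp add: not_less) (metis count_eq_zero_iff le_zero_eq)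
    have e2: "elem g' (g' - {#j#} + {#i#})" unfolding elem_def using h jg by blast
    have "count (g' - {#j#} + {#i#}) a \<le> count w a" for a
    proof -
      have "count g' a \<le> count v a" using g(3) by (simp add: mset_subset_eq_count)
      then show ?thesis unfolding h(4) by (cases "a = j"; cases "a = i") auto
    qed
    then have "g' - {#j#} + {#i#} \<subseteq># w" by (simp add: subseteq_mset_def)
    moreover have "elem\<^sup>*\<^sup>* g (g' - {#j#} + {#i#})" using g(2) e2 by (rule rtranclp.rtrancl_into_rtrancl)
    ultimately show ?thesis using g(1) wm unfolding Cl_def by blast
  qed
qed

lemma Cl_star: "elem\<^sup>*\<^sup>* v w \<Longrightarrow> v \<in> Cl n T \<Longrightarrow> w \<in> Cl n T"
  by (induction rule: rtranclp_induct) (auto intro: Cl_elem)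

lemma Cl_borel: "T \<subseteq> monomials n \<Longrightarrow> borel_ideal n (Cl n T) \<and> T \<subseteq> Cl n T"
proof -
  assume T: "T \<subseteq> monomials n"
  have mi: "monomial_ideal n (Cl n T)"
    unfolding monomial_ideal_def
  proof
    show "Cl n T \<subseteq> monomials n" unfolding Cl_def by blast
    show "\<forall>u\<in>Cl n T. \<forall>v\<in>monomials n. u + v \<in> Cl n T"
    proof (intro ballI)
      fix u v assume u: "u \<in> Cl n T" and v: "v \<in> monomials n"
      then obtain g g' where "g \<in> T" "elem\<^sup>*\<^sup>* g g'" "g' \<subseteq># u" "u \<in> monomials n"
        unfolding Cl_def by blast
      moreover have "u + v \<in> monomials n" using \<open>u \<in> monomials n\<close> v
        unfolding monomials_def by auto
      moreover have "g' \<subseteq># u + v" using \<open>g' \<subseteq># u\<close>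
        by (simp add: subset_mset.add_increasing2)
      ultimately show "u + v \<in> Cl n T" unfolding Cl_def by blast
    qed
  qed
  have "T \<subseteq> Cl n T" using T unfolding Cl_def by blast
  then show ?thesis using mi Cl_star bm_star unfolding borel_ideal_def by blast
qed

lemma shift:
  assumes "\<forall>x\<in>#b. p < x" "\<forall>y\<in>#r. 1 \<le> y \<and> y \<le> p" "size b \<le> size r"
  shows "\<exists>c. c \<subseteq># r \<and> elem\<^sup>*\<^sup>* (a + b) (a + c)"
  using assms
proof (induction b arbitrary: a r)
  case empty
  then show ?case by (rule_tac x="{#}" in exI) simp
next
  case (add x b)
  then have "r \<noteq> {#}" by auto
  then obtain y where y: "y \<in># r" by blast
  have e1: "elem (a + add_mset x b) (a + add_mset y b)"
    unfolding elem_def using y add.prems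
    by (rule_tac x=y in exI, rule_tac x=x in exI) force
  have "size b \<le> size (r - {#y#})" using add.prems(3) y by (simp add: size_Diff_singleton)
  moreover have "\<forall>y\<in>#r - {#y#}. 1 \<le> y \<and> y \<le> p" using add.prems(2) by (auto dest: in_diffD)
  ultimately obtain c where c: "c \<subseteq># r - {#y#}" "elem\<^sup>*\<^sup>* (add_mset y a + b) (add_mset y a + c)"
    using add.IH[of "r - {#y#}" "add_mset y a"] add.prems(1) by auto
  have "add_mset y c \<subseteq># r" using c(1) y
    by (metis insert_subset_eq_iff)
  moreover have "elem\<^sup>*\<^sup>* (a + add_mset x b) (a + add_mset y c)"
    using e1 c(2) by (simp add: converse_rtranclp_into_rtranclp)
  ultimately show ?case by blast
qed


theorem lemma3p15:
  fixes n p :: nat and B T :: "monomial set" and m :: monomial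
  assumes "borel_ideal n B"
    and "is_Bgens n B T"
    and "m \<in> T"
    and "m \<noteq> {#}"
    and "mmax m = p"
    and "\<forall>m'\<in>T. mdeg m' \<le> mdeg m"
  shows "is_socle n B (m - {#p#}) p"
proof -
  define \<nu> where "\<nu> = m - {#p#}"
  have Tm: "T \<subseteq> monomials n" and gen: "borel_gen n T = B"
    and minim: "\<forall>T'. T' \<subset> T \<longrightarrow> borel_gen n T' \<noteq> B"
    using assms(2) unfolding is_Bgens_def by auto
  have TB: "T \<subseteq> B" using gen unfolding borel_gen_def by blast
  have mi: "monomial_ideal n B" using assms(1) unfolding borel_ideal_def by blast
  have pm: "p \<in># m" using assms(4,5) unfolding mmax_def
    by (metis Max_in finite_set_mset set_mset_eq_empty_iff)
  have mle: "\<forall>k\<in>#m. k \<le> p" using assms(5) unfolding mmax_def by auto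
  have mmon: "m \<in> monomials n" using assms(3) Tm by blast
  have m_eq: "m = add_mset p \<nu>" unfolding \<nu>_def using pm by simp
  have num: "\<nu> \<in> monomials n" using mmon m_eq unfolding monomials_def by auto
  have mrange: "\<forall>k\<in>#m. 1 \<le> k \<and> k \<le> p" using mmon mle unfolding monomials_def by auto
  have A: "var_ideal n p \<subseteq> colon n B \<nu>"
  proof
    fix u assume "u \<in> var_ideal n p"
    then obtain i where u: "u \<in> monomials n" "i \<in># u" "i \<le> p"
      unfolding var_ideal_def by blast
    have i1: "1 \<le> i" using u unfolding monomials_def by auto
    have st: "elem\<^sup>*\<^sup>* m (add_mset i \<nu>)"
    proof (cases "i = p")
      case True then show ?thesis using m_eq by simp
    next
      case False
      then have "elem m (add_mset i \<nu>)" unfolding elem_def using i1 u(3) pm \<nu>_def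
        by (rule_tac x=i in exI, rule_tac x=p in exI) auto
      then show ?thesis by blast
    qed
    have iB: "add_mset i \<nu> \<in> B" using borel_star_closed[OF assms(1) st] TB assms(3) by blast
    have "u - {#i#} \<in> monomials n" using u(1) unfolding monomials_def by (auto dest: in_diffD)
    then have xB: "add_mset i \<nu> + (u - {#i#}) \<in> B" using mi iB unfolding monomial_ideal_def by blast
    have e: "add_mset i \<nu> + (u - {#i#}) = u + \<nu>"
    proof -
      obtain u' where "u = add_mset i u'" using u(2) by (metis multi_member_split)
      then show ?thesis by simp
    qed
    have "u + \<nu> \<in> B" using xB unfolding e .
    then show "u \<in> colon n B \<nu>" using u(1) unfolding colon_def by blast
  qed
  have C: "colon n B \<nu> \<subseteq> var_ideal n p"
  proof
    fix u assume "u \<in> colon n B \<nu>"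
    then have u: "u \<in> monomials n" "u + \<nu> \<in> B" unfolding colon_def by auto
    show "u \<in> var_ideal n p"
    proof (rule ccontr)
      assume "u \<notin> var_ideal n p"
      then have ugt: "\<forall>x\<in>#u. p < x" using u(1) unfolding var_ideal_def by (auto simp: not_le)
      have "B \<subseteq> Cl n T" using gen Cl_borel[OF Tm] unfolding borel_gen_def by blast
      then obtain g g' where g: "g \<in> T" "elem\<^sup>*\<^sup>* g g'" "g' \<subseteq># u + \<nu>"
        using u(2) unfolding Cl_def by blast
      define a where "a = g' \<inter># \<nu>"
      define b where "b = g' - a"
      have a\<nu>: "a \<subseteq># \<nu>" unfolding a_def by simp
      have ag: "a \<subseteq># g'" unfolding a_def by simp
      have gab: "g' = a + b" unfolding b_def
        using ag by (simp only: subset_mset.add_diff_inverse)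
      have bu: "b \<subseteq># u" using g(3) unfolding b_def a_def subseteq_mset_def
        by (simp add: le_diff_conv add.commute)
      have bgt: "\<forall>x\<in>#b. p < x" using bu ugt by (meson mset_subset_eqD)
      have sz: "size g' = size g" using star_size[OF g(2)] .
      have szg: "size g \<le> size m" using assms(6) g(1) unfolding mdeg_def by blast
      have szm: "size m = Suc (size \<nu>)" using m_eq by simp
      have gm: "g \<noteq> m"
      proof
        assume "g = m"
        then have "\<forall>k\<in>#g'. k \<le> p" using star_le[OF g(2)] mle by blast
        then have "b = {#}" using bgt gab by (metis leD union_iff multiset_nonemptyE)
        then have "size g' \<le> size \<nu>" using gab a\<nu> by (simp add: size_mset_mono)
        then show False using sz szm \<open>g = m\<close> by simp
      qed
      define r where "r = add_mset p (\<nu> - a)"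
      have rr: "\<forall>y\<in>#r. 1 \<le> y \<and> y \<le> p" unfolding r_def using mrange m_eq pm
        by (auto dest: in_diffD)
      have "size r = Suc (size \<nu> - size a)" unfolding r_def using a\<nu>
        by (simp add: size_Diff_submset)
      moreover have "size a \<le> size \<nu>" using a\<nu> by (simp add: size_mset_mono)
      ultimately have "size b \<le> size r" using sz szg szm gab by simp
      then obtain c where c: "c \<subseteq># r" "elem\<^sup>*\<^sup>* (a + b) (a + c)"
        using shift[OF bgt rr] by blast
      have acm: "a + c \<subseteq># m"
      proof -
        have "a + c \<subseteq># a + r" using c(1) by simp
        moreover have "a + r = m" unfolding r_def m_eq using a\<nu> by simp
        ultimately show ?thesis by simp
      qed
      have gst: "elem\<^sup>*\<^sup>* g (a + c)" using g(2) c(2) gab by simp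
      have inI: "m \<in> I" if I: "borel_ideal n I" "T - {m} \<subseteq> I" for I
      proof -
        have "g \<in> I" using I(2) g(1) gm by blast
        then have "a + c \<in> I" using borel_star_closed[OF I(1) gst] by blast
        moreover have "m - (a + c) \<in> monomials n" using mmon unfolding monomials_def
          by (auto dest: in_diffD)
        ultimately have "(a + c) + (m - (a + c)) \<in> I" using I(1)
          unfolding borel_ideal_def monomial_ideal_def by blast
        then show ?thesis using acm by (simp add: subset_mset.add_diff_inverse)
      qed
      have "borel_gen n (T - {m}) = B"
      proof
        show "borel_gen n (T - {m}) \<subseteq> B" using assms(1) TB unfolding borel_gen_def by blast
        show "B \<subseteq> borel_gen n (T - {m})"
        proof
          fix v assume vB: "v \<in> B"
          show "v \<in> borel_gen n (T - {m})" unfolding borel_gen_def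
          proof
            fix I assume "I \<in> {B. borel_ideal n B \<and> T - {m} \<subseteq> B}"
            then have I: "borel_ideal n I" "T - {m} \<subseteq> I" by auto
            then have "T \<subseteq> I" using inI by blast
            then have "B \<subseteq> I" using gen I(1) unfolding borel_gen_def by blast
            then show "v \<in> I" using vB by blast
          qed
        qed
      qed
      moreover have "T - {m} \<subset> T" using assms(3) by blast
      ultimately show False using minim by blast
    qed
  qed
  show ?thesis unfolding is_socle_def \<nu>_def[symmetric] using num A C by blast
qed

end
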